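(* Let a group $G$ act by combinatorial isometries without cube inversions on a $\mathrm{CAT}(0)$ cube complex $Z$, and let $\mathfrak{H}$ be a $G$-invariant family of hyperplanes of $Z$ which is strongly collapsible. Then $\mathfrak{H}$ is weakly collapsible.
   Context: In a $\mathrm{CAT}(0)$ cube complex, hyperplanes are equivalence classes of edges under the relation generated by "being opposite edges of a square"; each hyperplane $H$ has two halfspaces (the components of the complement of its open carrier, the union of open cells whose closure contains an edge dual to $H$); the carrier of $H$ is the union of closed cubes containing an edge dual to $H$. For non-empty subsets $A,B$ (a hyperplane being replaced by its carrier), $\mathrm{Sep}(A\mid B)$ is the set of hyperplanes $H$ such that $A$ is contained in one halfspace of $H$ and $B$ in the other. A cube inversion is an isometry stabilizing some cube without fixing it pointwise. For a $G$-invariant family $\mathfrak{H}$ of hyperplanes: $\mathfrak{H}$ is weakly collapsible if for every vertex $z$ and every $g\in G\setminus\mathrm{Stab}(z)$, $\mathrm{Sep}(z\mid gz)\not\subseteq\mathfrak{H}$; $\mathfrak{H}$ is strongly collapsible if for every $H\in\mathfrak{H}$ and every $g\in G\setminus\mathrm{Stab}(H)$, $\mathrm{Sep}(H\mid gH)\not\subseteq\mathfrak{H}$. *)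

theory Defs
  imports "HOL-Algebra.Group_Action"
begin

text \<open>A CAT(0) cube complex is encoded by its 1-skeleton, which is a median graph
  (Chepoi / Roller / Gerasimov); the cube complex is the cube completion of that graph.\<close>

definition simple_graph :: "('v \<Rightarrow> 'v \<Rightarrow> bool) \<Rightarrow> bool" where
  "simple_graph E \<longleftrightarrow> (\<forall>u v. E u v \<longrightarrow> E v u) \<and> (\<forall>u. \<not> E u u)"

definition gconnected :: "('v \<Rightarrow> 'v \<Rightarrow> bool) \<Rightarrow> bool" where
  "gconnected E \<longleftrightarrow> (\<forall>u v. E\<^sup>*\<^sup>* u v)"

definition gdist :: "('v \<Rightarrow> 'v \<Rightarrow> bool) \<Rightarrow> 'v \<Rightarrow> 'v \<Rightarrow> nat" where
  "gdist E u v = (LEAST n. (E ^^ n) u v)"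

definition ginterval :: "('v \<Rightarrow> 'v \<Rightarrow> bool) \<Rightarrow> 'v \<Rightarrow> 'v \<Rightarrow> 'v set" where
  "ginterval E u v = {w. gdist E u w + gdist E w v = gdist E u v}"

definition median_graph :: "('v \<Rightarrow> 'v \<Rightarrow> bool) \<Rightarrow> bool" where
  "median_graph E \<longleftrightarrow> simple_graph E \<and> gconnected E \<and>
     (\<forall>x y z. \<exists>!m. m \<in> ginterval E x y \<inter> ginterval E y z \<inter> ginterval E x z)"

abbreviation cat0_cube_complex :: "('v \<Rightarrow> 'v \<Rightarrow> bool) \<Rightarrow> bool" where
  "cat0_cube_complex E \<equiv> median_graph E"

definition edges :: "('v \<Rightarrow> 'v \<Rightarrow> bool) \<Rightarrow> 'v set set" where
  "edges E = {{u, v} | u v. E u v}"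

text \<open>Cubes of the complex: vertex sets spanning a copy of the k-cube graph.\<close>
definition is_cube :: "('v \<Rightarrow> 'v \<Rightarrow> bool) \<Rightarrow> 'v set \<Rightarrow> bool" where
  "is_cube E C \<longleftrightarrow> (\<exists>(k::nat) (f :: 'v \<Rightarrow> nat \<Rightarrow> bool).
      bij_betw f C {x. \<forall>i\<ge>k. \<not> x i} \<and>
      (\<forall>u\<in>C. \<forall>v\<in>C. E u v \<longleftrightarrow> card {i. f u i \<noteq> f v i} = 1))"

definition opposite :: "('v \<Rightarrow> 'v \<Rightarrow> bool) \<Rightarrow> 'v set \<Rightarrow> 'v set \<Rightarrow> bool" where
  "opposite E e e' \<longleftrightarrow> (\<exists>a b c d. distinct [a, b, c, d] \<and>
      E a b \<and> E b c \<and> E c d \<and> E d a \<and> e = {a, b} \<and> e' = {d, c})"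

definition hyperplanes :: "('v \<Rightarrow> 'v \<Rightarrow> bool) \<Rightarrow> 'v set set set" where
  "hyperplanes E = {{e'. (opposite E)\<^sup>*\<^sup>* e e'} | e. e \<in> edges E}"

definition carrier_hyp :: "'v set set \<Rightarrow> 'v set" where
  "carrier_hyp H = \<Union>H"

text \<open>Halfspaces of H: components of the complement of the open carrier, i.e. the
  vertex sets of the connected components of the graph with the edges dual to H removed.\<close>
definition halfspaces :: "('v \<Rightarrow> 'v \<Rightarrow> bool) \<Rightarrow> 'v set set \<Rightarrow> 'v set set" where
  "halfspaces E H = range (\<lambda>v. {w. (\<lambda>x y. E x y \<and> {x, y} \<notin> H)\<^sup>*\<^sup>* v w})"

definition Sep :: "('v \<Rightarrow> 'v \<Rightarrow> bool) \<Rightarrow> 'v set \<Rightarrow> 'v set \<Rightarrow> 'v set set set" where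
  "Sep E A B = {H \<in> hyperplanes E. \<exists>h1 \<in> halfspaces E H. \<exists>h2 \<in> halfspaces E H.
      h1 \<noteq> h2 \<and> A \<subseteq> h1 \<and> B \<subseteq> h2}"

definition hyp_image :: "('v \<Rightarrow> 'v) \<Rightarrow> 'v set set \<Rightarrow> 'v set set" where
  "hyp_image f H = (\<lambda>e. f ` e) ` H"

definition isometric_action :: "('g, 'b) monoid_scheme \<Rightarrow> ('v \<Rightarrow> 'v \<Rightarrow> bool) \<Rightarrow> ('g \<Rightarrow> 'v \<Rightarrow> 'v) \<Rightarrow> bool" where
  "isometric_action G E phi \<longleftrightarrow> group_action G UNIV phi \<and>
     (\<forall>g\<in>carrier G. \<forall>u v. E u v \<longleftrightarrow> E (phi g u) (phi g v))"

definition no_cube_inversions :: "('g, 'b) monoid_scheme \<Rightarrow> ('v \<Rightarrow> 'v \<Rightarrow> bool) \<Rightarrow> ('g \<Rightarrow> 'v \<Rightarrow> 'v) \<Rightarrow> bool" where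
  "no_cube_inversions G E phi \<longleftrightarrow> (\<forall>g\<in>carrier G. \<forall>C. is_cube E C \<and> phi g ` C = C \<longrightarrow>
      (\<forall>v\<in>C. phi g v = v))"

definition invariant_family :: "('g, 'b) monoid_scheme \<Rightarrow> ('v \<Rightarrow> 'v \<Rightarrow> bool) \<Rightarrow> ('g \<Rightarrow> 'v \<Rightarrow> 'v) \<Rightarrow> 'v set set set \<Rightarrow> bool" where
  "invariant_family G E phi \<HH> \<longleftrightarrow> \<HH> \<subseteq> hyperplanes E \<and>
      (\<forall>g\<in>carrier G. \<forall>H\<in>\<HH>. hyp_image (phi g) H \<in> \<HH>)"

definition weakly_collapsible :: "('g, 'b) monoid_scheme \<Rightarrow> ('v \<Rightarrow> 'v \<Rightarrow> bool) \<Rightarrow> ('g \<Rightarrow> 'v \<Rightarrow> 'v) \<Rightarrow> 'v set set set \<Rightarrow> bool" where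
  "weakly_collapsible G E phi \<HH> \<longleftrightarrow> (\<forall>z. \<forall>g\<in>carrier G. phi g z \<noteq> z \<longrightarrow>
      \<not> Sep E {z} {phi g z} \<subseteq> \<HH>)"

definition strongly_collapsible :: "('g, 'b) monoid_scheme \<Rightarrow> ('v \<Rightarrow> 'v \<Rightarrow> bool) \<Rightarrow> ('g \<Rightarrow> 'v \<Rightarrow> 'v) \<Rightarrow> 'v set set set \<Rightarrow> bool" where
  "strongly_collapsible G E phi \<HH> \<longleftrightarrow> (\<forall>H\<in>\<HH>. \<forall>g\<in>carrier G. hyp_image (phi g) H \<noteq> H \<longrightarrow>
      \<not> Sep E (carrier_hyp H) (carrier_hyp (hyp_image (phi g) H)) \<subseteq> \<HH>)"

end

theory Submission
  imports Defs
begin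

locale mg =
  fixes E :: "'v \<Rightarrow> 'v \<Rightarrow> bool"
  assumes med: "median_graph E"
begin

abbreviation d where "d \<equiv> gdist E"

lemma Esym: "E u v \<Longrightarrow> E v u"
  using med unfolding median_graph_def simple_graph_def by blast

lemma Eirr: "\<not> E u u"
  using med unfolding median_graph_def simple_graph_def by blast

lemma conn_ex: "\<exists>n. (E ^^ n) u v"
  using med unfolding median_graph_def gconnected_def by (meson rtranclp_imp_relpowp)

lemma d_path: "(E ^^ d u v) u v"
  unfolding gdist_def using conn_ex by (rule LeastI_ex)

lemma d_le: "(E ^^ n) u v \<Longrightarrow> d u v \<le> n"
  unfolding gdist_def by (rule Least_le)

lemma pow_sym: "(E ^^ n) u v \<Longrightarrow> (E ^^ n) v u"
proof (induction n arbitrary: u v)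
  case 0 then show ?case by (auto elim: relpowp_0_E)
next
  case (Suc n)
  from Suc.prems obtain y where "(E ^^ n) u y" "E y v" by (auto elim: relpowp_Suc_E)
  then show ?case using Suc.IH Esym by (meson relpowp_Suc_I2)
qed

lemma d_sym: "d u v = d v u"
  by (meson antisym d_le d_path pow_sym)

lemma d_0[simp]: "d u v = 0 \<longleftrightarrow> u = v"
proof
  assume "d u v = 0" then show "u = v" using d_path[of u v] by (auto elim: relpowp_0_E)
next
  assume "u = v" then show "d u v = 0" using d_le[of 0 u v] by (simp add: relpowp_0_I)
qed

lemma d_self[simp]: "d u u = 0" by simp

lemma d_tri: "d u w \<le> d u v + d v w"
  using d_le[OF relpowp_trans[OF d_path[of u v] d_path[of v w]]] .

lemma d_edge: "E u v \<Longrightarrow> d u v = 1"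
proof -
  assume e: "E u v"
  have "(E ^^ 1) u v" using e by (simp only: relpowp_1)
  then have "d u v \<le> 1" by (rule d_le)
  moreover have "u \<noteq> v" using e Eirr by auto
  ultimately show ?thesis using d_0[of u v] by linarith
qed

lemma d_1: "d u v = 1 \<Longrightarrow> E u v"
  using d_path[of u v] by (simp only: relpowp_1)

lemma d_edge_iff: "d u v = 1 \<longleftrightarrow> E u v"
  using d_1 d_edge by blast

lemma d_step: "d u v = Suc n \<Longrightarrow> \<exists>u'. E u u' \<and> d u' v = n"
proof -
  assume h: "d u v = Suc n"
  then obtain y where y: "E u y" "(E ^^ n) y v" using d_path[of u v] relpowp_Suc_D2 by metis
  have "d y v \<le> n" using d_le y by blast
  moreover have "d u v \<le> d u y + d y v" by (rule d_tri)
  ultimately have "d y v = n" using h d_edge[OF y(1)] by linarith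
  then show ?thesis using y by blast
qed

lemma d_lip: "E u v \<Longrightarrow> d u p \<le> d v p + 1"
  using d_tri[of u p v] d_edge by simp

lemma d_lip2: "E u v \<Longrightarrow> d v p \<le> d u p + 1"
  using d_lip Esym by blast

lemma median_ex: "\<exists>m. m \<in> ginterval E x y \<inter> ginterval E y z \<inter> ginterval E x z"
  using med unfolding median_graph_def by blast

lemma median_uniq: "m1 \<in> ginterval E x y \<inter> ginterval E y z \<inter> ginterval E x z \<Longrightarrow>
   m2 \<in> ginterval E x y \<inter> ginterval E y z \<inter> ginterval E x z \<Longrightarrow> m1 = m2"
  using med unfolding median_graph_def by blast

lemma ginterval_iff: "m \<in> ginterval E x y \<longleftrightarrow> d x m + d m y = d x y"
  unfolding ginterval_def by simp

lemma median_d: obtains m where "d x m + d m y = d x y" "d y m + d m z = d y z" "d x m + d m z = d x z"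
proof -
  obtain m where "m \<in> ginterval E x y \<inter> ginterval E y z \<inter> ginterval E x z" using median_ex by blast
  then have "d x m + d m y = d x y \<and> d y m + d m z = d y z \<and> d x m + d m z = d x z"
    by (simp add: ginterval_iff)
  then show ?thesis using that by blast
qed

lemma bip: "E a b \<Longrightarrow> d x b = d x a + 1 \<or> d x a = d x b + 1"
proof -
  assume ab: "E a b"
  obtain m where m: "d x m + d m a = d x a" "d a m + d m b = d a b" "d x m + d m b = d x b"
    using median_d[of x a b] by blast
  have dab: "d a b = 1" using d_edge ab by simp
  then have "d a m = 0 \<or> d m b = 0" using m(2) by linarith
  then have "m = a \<or> m = b" by auto
  then show ?thesis using m dab by (auto simp: d_sym)
qed

lemma edge_diff: "E u v \<Longrightarrow> d u p = d v p + 1 \<or> d v p = d u p + 1"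
  using bip[of u v p] d_sym[of u p] d_sym[of v p] by auto

lemma two_apart: "u \<noteq> v \<Longrightarrow> E u c \<Longrightarrow> E v c \<Longrightarrow> d u v = 2 \<and> \<not> E u v"
proof -
  assume h: "u \<noteq> v" "E u c" "E v c"
  have "\<not> E u v" using edge_diff[of u v c] h d_edge[of u c] d_edge[of v c] by (auto simp: d_sym)
  moreover have "d u v \<le> 2" using d_tri[of u v c] d_edge[OF h(2)] d_edge[OF h(3)] d_sym[of c v] by linarith
  moreover have "d u v \<noteq> 0" "d u v \<noteq> 1" using h calculation(1) d_edge_iff by auto
  ultimately show ?thesis by linarith
qed

lemma K23: "u \<noteq> v \<Longrightarrow> E u c1 \<Longrightarrow> E v c1 \<Longrightarrow> E u c2 \<Longrightarrow> E v c2 \<Longrightarrow> E u c3 \<Longrightarrow> E v c3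
  \<Longrightarrow> c1 \<noteq> c2 \<Longrightarrow> c1 \<noteq> c3 \<Longrightarrow> c2 \<noteq> c3 \<Longrightarrow> False"
proof -
  assume h: "u \<noteq> v" "E u c1" "E v c1" "E u c2" "E v c2" "E u c3" "E v c3" "c1 \<noteq> c2" "c1 \<noteq> c3" "c2 \<noteq> c3"
  have e: "E c1 u" "E c2 u" "E c3 u" "E c1 v" "E c2 v" "E c3 v" using h Esym by auto
  have "d c1 c2 = 2" "d c2 c3 = 2" "d c1 c3 = 2" using two_apart e h by auto
  moreover have "d ci w = 1" "d w ci = 1" if "ci \<in> {c1,c2,c3}" "w \<in> {u,v}" for ci w
    using that e d_edge d_sym by auto
  ultimately have "u \<in> ginterval E c1 c2 \<inter> ginterval E c2 c3 \<inter> ginterval E c1 c3"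
    "v \<in> ginterval E c1 c2 \<inter> ginterval E c2 c3 \<inter> ginterval E c1 c3"
    by (auto simp: ginterval_def)
  then show False using median_uniq h by blast
qed

lemma H4: "u \<noteq> v \<Longrightarrow> E u c1 \<Longrightarrow> E v c1 \<Longrightarrow> E u c2 \<Longrightarrow> E v c2 \<Longrightarrow> c1 \<noteq> c2 \<Longrightarrow>
  d v p = d u p \<Longrightarrow> d c1 p + 1 = d u p \<Longrightarrow> d c2 p + 1 = d u p \<Longrightarrow> False"
proof -
  assume h: "u \<noteq> v" "E u c1" "E v c1" "E u c2" "E v c2" "c1 \<noteq> c2"
     "d v p = d u p" "d c1 p + 1 = d u p" "d c2 p + 1 = d u p"
  have "d u v = 2" using two_apart h by auto
  moreover have "d ci w = 1" "d w ci = 1" if "ci \<in> {c1,c2}" "w \<in> {u,v}" for ci w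
    using that h d_edge d_sym Esym by auto
  ultimately have "c1 \<in> ginterval E u v \<inter> ginterval E v p \<inter> ginterval E u p"
    "c2 \<in> ginterval E u v \<inter> ginterval E v p \<inter> ginterval E u p"
    using h by (auto simp: ginterval_def)
  then show False using median_uniq h by blast
qed

lemma common_closer: "u \<noteq> v \<Longrightarrow> E u c \<Longrightarrow> E v c \<Longrightarrow> d v p = d u p \<Longrightarrow>
   \<exists>m. E u m \<and> E v m \<and> d m p + 1 = d u p"
proof -
  assume h: "u \<noteq> v" "E u c" "E v c" "d v p = d u p"
  obtain m where m: "d u m + d m v = d u v" "d v m + d m p = d v p" "d u m + d m p = d u p"
    using median_d by blast
  have "d u v = 2" using two_apart h by auto
  then have "d u m = 1" "d v m = 1" using m h d_sym[of v m] by linarith+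
  then show ?thesis using m d_1 by (metis add.commute)
qed

lemma H5: "u \<noteq> v \<Longrightarrow> E u c1 \<Longrightarrow> E v c1 \<Longrightarrow> E u c2 \<Longrightarrow> E v c2 \<Longrightarrow> c1 \<noteq> c2 \<Longrightarrow>
  d v p = d u p \<Longrightarrow> d c1 p = d u p + 1 \<Longrightarrow> d c2 p = d u p + 1 \<Longrightarrow> False"
proof -
  assume h: "u \<noteq> v" "E u c1" "E v c1" "E u c2" "E v c2" "c1 \<noteq> c2"
     "d v p = d u p" "d c1 p = d u p + 1" "d c2 p = d u p + 1"
  obtain m where m: "E u m" "E v m" "d m p + 1 = d u p" using common_closer h by blast
  have "c1 \<noteq> m" "c2 \<noteq> m" using m h by auto
  then show False using K23[of u v c1 c2 m] h m by auto
qed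

lemma opp_sym: "opposite E e e' \<Longrightarrow> opposite E e' e"
  unfolding opposite_def
proof (elim exE conjE)
  fix a b c dd assume h: "distinct [a, b, c, dd]" "E a b" "E b c" "E c dd" "E dd a" "e = {a, b}" "e' = {dd, c}"
  show "\<exists>a b c d. distinct [a, b, c, d] \<and> E a b \<and> E b c \<and> E c d \<and> E d a \<and> e' = {a, b} \<and> e = {d, c}"
    apply (rule exI[of _ dd], rule exI[of _ c], rule exI[of _ b], rule exI[of _ a])
    using h Esym by auto
qed

lemma square:
  assumes ab: "E a b" and sq: "E x y" "E y y'" "E y' x'" "E x' x" "distinct [x, y, y', x']"
    and sx: "d x a < d x b" and sy: "d y b < d y a"
  shows "d x' a < d x' b \<and> d y' b < d y' a"
proof (rule ccontr)
  assume ng: "\<not> ?thesis"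
  have f: "d x b = d x a + 1 \<or> d x a = d x b + 1" "d y b = d y a + 1 \<or> d y a = d y b + 1"
    "d y' b = d y' a + 1 \<or> d y' a = d y' b + 1" "d x' b = d x' a + 1 \<or> d x' a = d x' b + 1"
    using bip[OF ab] by auto
  have g: "d x p = d y p + 1 \<or> d y p = d x p + 1" "d y p = d y' p + 1 \<or> d y' p = d y p + 1"
    "d y' p = d x' p + 1 \<or> d x' p = d y' p + 1" "d x' p = d x p + 1 \<or> d x p = d x' p + 1" for p
    using edge_diff sq by blast+
  have b0: "d x b = d x a + 1" "d y a = d x a + 1" "d y b = d x a"
    using f(1,2) g(1)[of a] g(1)[of b] sx sy by linarith+
  have xa: "d x' a + 1 = d x a \<or> d x' a = d x a + 1" using g(4)[of a] by linarith
  have yb: "d y' b + 1 = d x a \<or> d y' b = d x a + 1" using g(2)[of b] b0 by linarith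
  have ya: "d y' a = d x a \<or> d y' a = d x a + 2" using g(2)[of a] b0 by linarith
  have xb: "d x' b = d x a \<or> d x' b = d x a + 2" using g(4)[of b] b0 by linarith
  have "(d x' a + 1 = d x a \<and> d y' a = d x a \<and> d y' b = d x b \<and> d x' b + 1 = d x b)
     \<or> (d y' a = d x a \<and> d x' a = d x a + 1) \<or> (d x' b = d y b \<and> d y' b = d y b + 1)"
  proof (cases "d x' a + 1 = d x a")
    case True
    have 1: "d x' b = d x a" using True xb f(4) by linarith
    have 2: "d y' a = d x a" using True ya g(3)[of a] by linarith
    show ?thesis
    proof (cases "d y' b + 1 = d x a")
      case True2: True
      have "d x' a < d x' b \<and> d y' b < d y' a" using True True2 1 2 by linarith
      then show ?thesis using ng by blast
    next
      case False
      then have "d y' b = d x a + 1" using yb by linarith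
      then show ?thesis using True 1 2 b0 by linarith
    qed
  next
    case False
    then have 0: "d x' a = d x a + 1" using xa by linarith
    show ?thesis
    proof (cases "d y' a = d x a")
      case True
      then show ?thesis using 0 by blast
    next
      case False
      then have 1: "d y' a = d x a + 2" using ya by linarith
      then have 2: "d y' b = d x a + 1" using yb f(3) by linarith
      show ?thesis
      proof (cases "d x' b = d x a")
        case True
        then show ?thesis using 2 b0 by linarith
      next
        case False
        then have "d x' b = d x a + 2" using xb by linarith
        then have "d x' a < d x' b \<and> d y' b < d y' a" using 0 1 2 by linarith
        then show ?thesis using ng by blast
      qed
    qed
  qed
  moreover have dd: "x \<noteq> y'" "y \<noteq> x'" using sq(5) by auto
  moreover have e: "E x y" "E y' y" "E x x'" "E y' x'" "E y x" "E x' y'" using sq Esym by auto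
  moreover have "y \<noteq> x'" "x \<noteq> y'" using sq(5) by auto
  ultimately show False
    using H4[of x y' y x' b] H5[of x y' y x' a] H5[of y x' x y' b] b0 by auto
qed

definition cls where "cls e = {e'. (opposite E)\<^sup>*\<^sup>* e e'}"
definition R where "R H x y \<longleftrightarrow> E x y \<and> {x, y} \<notin> H"
definition conn where "conn H = (R H)\<^sup>*\<^sup>*"

lemma opp_cross:
  assumes "(opposite E)\<^sup>*\<^sup>* {a, b} e" "E a b"
  shows "\<exists>x y. e = {x, y} \<and> E x y \<and> d x a < d x b \<and> d y b < d y a"
  using assms(1)
proof (induction rule: rtranclp_induct)
  case base
  then show ?case using assms(2) d_edge[OF assms(2)] d_sym[of b a] by (intro exI[of _ a] exI[of _ b]) auto
next
  case (step e1 e2)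
  obtain x y where xy: "e1 = {x, y}" "E x y" "d x a < d x b" "d y b < d y a" using step.IH by blast
  obtain p q r s where o: "distinct [p, q, r, s]" "E p q" "E q r" "E r s" "E s p" "e1 = {p, q}" "e2 = {s, r}"
    using step.hyps(2) unfolding opposite_def by blast
  have "(p = x \<and> q = y) \<or> (p = y \<and> q = x)" using xy(1) o(6) by (auto simp: doubleton_eq_iff)
  then show ?case
  proof
    assume h: "p = x \<and> q = y"
    have "d s a < d s b \<and> d r b < d r a"
      using square[OF assms(2), of p q r s] o h xy by auto
    then show ?thesis using o Esym by (intro exI[of _ s] exI[of _ r]) auto
  next
    assume h: "p = y \<and> q = x"
    have "d r a < d r b \<and> d s b < d s a"
      using square[OF assms(2), of q p s r] o h xy Esym by auto
    then show ?thesis using o Esym by (intro exI[of _ r] exI[of _ s]) auto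
  qed
qed

lemma cross_opp:
  assumes "E a b" "E x y" "d x a < d x b" "d y b < d y a"
  shows "(opposite E)\<^sup>*\<^sup>* {a, b} {x, y}"
  using assms(2-)
proof (induction "d x a" arbitrary: x y)
  case 0
  then have "x = a" by simp
  moreover have "d y b = 0"
    using 0 bip[OF assms(1), of x] bip[OF assms(1), of y] edge_diff[OF 0(2), of a] edge_diff[OF 0(2), of b]
    by linarith
  ultimately show ?case by simp
next
  case (Suc n)
  have bx: "d x b = Suc n + 1" "d y a = Suc n + 1" "d y b = Suc n"
    using Suc.hyps(2) Suc.prems bip[OF assms(1), of x] bip[OF assms(1), of y]
      edge_diff[OF Suc.prems(1), of a] edge_diff[OF Suc.prems(1), of b] by linarith+
  obtain x' where x': "E x x'" "d x' a = n" using d_step[of x a n] Suc.hyps(2) by auto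
  have x'b: "d x' b = Suc n"
    using x' bx bip[OF assms(1), of x'] edge_diff[OF x'(1), of b] by linarith
  have "y \<noteq> x'" using bx x' by auto
  then have dyx: "d y x' = 2" using two_apart[of y x' x] Suc.prems(1) x'(1) Esym by blast
  obtain m where m: "d y m + d m x' = d y x'" "d x' m + d m b = d x' b" "d y m + d m b = d y b"
    using median_d[of y x' b] by blast
  have "d y m = 1" "d x' m = 1" using m dyx bx x'b d_sym[of m x'] by linarith+
  then have ym: "E y m" "E x' m" using d_1 by auto
  have mb: "d m b = n" using m bx \<open>d y m = 1\<close> by linarith
  have ma: "d m a \<ge> Suc n" using edge_diff[OF ym(1), of a] bx by linarith
  have IH: "(opposite E)\<^sup>*\<^sup>* {a, b} {x', m}"
    using Suc.hyps(1)[of x' m] x' ym mb ma x'b by auto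
  have "x \<noteq> m" using mb bx by auto
  then have "opposite E {x', m} {x, y}"
    unfolding opposite_def using x' ym Suc.prems(1) Esym Eirr \<open>y \<noteq> x'\<close>
    by (intro exI[of _ x'] exI[of _ m] exI[of _ y] exI[of _ x]) (auto simp: insert_commute)
  then show ?case using IH by simp
qed

lemma opp_rt_sym: "(opposite E)\<^sup>*\<^sup>* e e' \<Longrightarrow> (opposite E)\<^sup>*\<^sup>* e' e"
proof -
  have "symp (opposite E)" using opp_sym by (auto intro: sympI)
  then have "symp (opposite E)\<^sup>*\<^sup>*" by (rule symp_rtranclp)
  then show "(opposite E)\<^sup>*\<^sup>* e e' \<Longrightarrow> (opposite E)\<^sup>*\<^sup>* e' e" by (meson sympD)
qed

lemma cls_eq: "e' \<in> cls e \<Longrightarrow> cls e' = cls e"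
  unfolding cls_def using opp_rt_sym by (auto intro: rtranclp_trans)

lemma cls_self: "e \<in> cls e" unfolding cls_def by simp

lemma conn_sym: "conn H u v \<Longrightarrow> conn H v u"
proof -
  have "symp (R H)" unfolding R_def using Esym by (auto intro!: sympI simp: insert_commute)
  then have "symp (R H)\<^sup>*\<^sup>*" by (rule symp_rtranclp)
  then show "conn H u v \<Longrightarrow> conn H v u" unfolding conn_def by (meson sympD)
qed

lemma conn_trans: "conn H u v \<Longrightarrow> conn H v w \<Longrightarrow> conn H u w"
  unfolding conn_def by (rule rtranclp_trans)

lemma to_a:
  assumes ab: "E a b"
  shows "d u a < d u b \<Longrightarrow> conn (cls {a, b}) u a"
proof (induction "d u a" arbitrary: u)
  case 0
  then show ?case unfolding conn_def by simp
next
  case (Suc n)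
  obtain u' where u': "E u u'" "d u' a = n" using d_step[of u a n] Suc.hyps(2) by auto
  have s': "d u' a < d u' b" using Suc.hyps(2) Suc.prems u' edge_diff[OF u'(1), of b] by linarith
  have "{u, u'} \<notin> cls {a, b}"
  proof
    assume "{u, u'} \<in> cls {a, b}"
    then obtain x y where "{u, u'} = {x, y}" "d x a < d x b" "d y b < d y a"
      using opp_cross[OF _ ab] unfolding cls_def by blast
    then show False using Suc.prems s' by (auto simp: doubleton_eq_iff)
  qed
  then have "R (cls {a, b}) u u'" unfolding R_def using u' by simp
  moreover have "conn (cls {a, b}) u' a" using Suc.hyps(1)[of u'] u' s' by simp
  ultimately show ?case unfolding conn_def by (rule converse_rtranclp_into_rtranclp)
qed

lemma side_cases: "E a b \<Longrightarrow> d u a < d u b \<or> d u b < d u a"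
  using bip[of a b u] by linarith

lemma conn_iff:
  assumes ab: "E a b"
  shows "conn (cls {a, b}) u v \<longleftrightarrow> (d u a < d u b \<longleftrightarrow> d v a < d v b)"
proof
  assume "conn (cls {a, b}) u v"
  then show "d u a < d u b \<longleftrightarrow> d v a < d v b"
    unfolding conn_def
  proof (induction rule: rtranclp_induct)
    case base then show ?case by simp
  next
    case (step y z)
    have yz: "E y z" "{y, z} \<notin> cls {a, b}" using step.hyps(2) unfolding R_def by auto
    have "d y a < d y b \<longleftrightarrow> d z a < d z b"
    proof (rule ccontr)
      assume "\<not> ?thesis"
      then have "(d y a < d y b \<and> d z b < d z a) \<or> (d z a < d z b \<and> d y b < d y a)"
        using side_cases[OF ab, of y] side_cases[OF ab, of z] by linarith
      then have "{y, z} \<in> cls {a, b}"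
        using cross_opp[OF ab, of y z] cross_opp[OF ab, of z y] yz Esym
        unfolding cls_def by (auto simp: insert_commute)
      then show False using yz by simp
    qed
    then show ?case using step.IH by simp
  qed
next
  have ba: "E b a" using ab Esym by simp
  have c: "cls {b, a} = cls {a, b}" by (simp add: insert_commute)
  have ta: "d w a < d w b \<Longrightarrow> conn (cls {a, b}) w a" for w using to_a[OF ab] .
  have tb: "d w b < d w a \<Longrightarrow> conn (cls {a, b}) w b" for w using to_a[OF ba] c by simp
  assume h: "d u a < d u b \<longleftrightarrow> d v a < d v b"
  show "conn (cls {a, b}) u v"
  proof (cases "d u a < d u b")
    case True
    then show ?thesis using h ta[of u] ta[of v] conn_sym conn_trans by blast
  next
    case False
    then have "d u b < d u a" "d v b < d v a" using h side_cases[OF ab, of u] side_cases[OF ab, of v] by auto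
    then show ?thesis using tb[of u] tb[of v] conn_sym conn_trans by blast
  qed
qed

lemma hyp_ex: "H \<in> hyperplanes E \<Longrightarrow> \<exists>a b. E a b \<and> H = cls {a, b}"
  unfolding hyperplanes_def edges_def cls_def by blast

lemma cls_hyp: "E a b \<Longrightarrow> cls {a, b} \<in> hyperplanes E"
  unfolding hyperplanes_def edges_def cls_def by blast



lemma conn_refl: "conn H u u" unfolding conn_def by simp

lemma hs_eq: "halfspaces E H = range (\<lambda>p. {w. conn H p w})"
  unfolding halfspaces_def conn_def R_def by simp

lemma Sep_single: "Sep E {u} {v} = {H \<in> hyperplanes E. \<not> conn H u v}"
proof (rule equalityI; rule subsetI)
  fix H assume "H \<in> Sep E {u} {v}"
  then obtain h1 h2 where h: "H \<in> hyperplanes E" "h1 \<in> halfspaces E H" "h2 \<in> halfspaces E H"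
    "h1 \<noteq> h2" "u \<in> h1" "v \<in> h2" unfolding Sep_def by blast
  obtain p1 p2 where p: "h1 = {w. conn H p1 w}" "h2 = {w. conn H p2 w}" using h(2,3) hs_eq by auto
  have "\<not> conn H u v"
  proof
    assume uv: "conn H u v"
    have "h1 = h2"
    proof -
      have a1: "conn H p1 u" "conn H p2 v" using h(5,6) unfolding p by simp_all
      have "conn H p1 p2" using conn_trans[OF a1(1) conn_trans[OF uv conn_sym[OF a1(2)]]] .
      then have "conn H p1 w \<longleftrightarrow> conn H p2 w" for w
        using conn_sym[of H p1 p2] conn_trans[of H p1 p2 w] conn_trans[of H p2 p1 w] by blast
      then have "{w. conn H p1 w} = {w. conn H p2 w}" by (intro Collect_cong)
      then show ?thesis unfolding p .
    qed
    then show False using h(4) by simp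
  qed
  then show "H \<in> {H \<in> hyperplanes E. \<not> conn H u v}" using h by simp
next
  fix H assume "H \<in> {H \<in> hyperplanes E. \<not> conn H u v}"
  then have h: "H \<in> hyperplanes E" "\<not> conn H u v" by auto
  have ne: "{w. conn H u w} \<noteq> {w. conn H v w}"
  proof
    assume "{w. conn H u w} = {w. conn H v w}"
    then have "v \<in> {w. conn H u w}" using conn_refl[of H v] by simp
    then show False using h(2) by simp
  qed
  have "{w. conn H u w} \<in> halfspaces E H" "{w. conn H v w} \<in> halfspaces E H" unfolding hs_eq by auto
  moreover have "{u} \<subseteq> {w. conn H u w}" "{v} \<subseteq> {w. conn H v w}" using conn_refl by auto
  ultimately have "\<exists>h1\<in>halfspaces E H. \<exists>h2\<in>halfspaces E H. h1 \<noteq> h2 \<and> {u} \<subseteq> h1 \<and> {v} \<subseteq> h2"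
    using ne by (intro bexI[of _ "{w. conn H u w}"] bexI[of _ "{w. conn H v w}"]) simp_all
  then show "H \<in> Sep E {u} {v}" unfolding Sep_def using h(1) by simp
qed

abbreviation S where "S u v \<equiv> Sep E {u} {v}"

lemma S_hyp: "S u v \<subseteq> hyperplanes E"
  unfolding Sep_single by auto

lemma S_iff_side: "E a b \<Longrightarrow> cls {a, b} \<in> S u v \<longleftrightarrow> \<not> (d u a < d u b \<longleftrightarrow> d v a < d v b)"
  unfolding Sep_single using cls_hyp conn_iff by simp

lemma S_sym: "S u v = S v u"
  unfolding Sep_single using conn_sym by blast

lemma xor: "H \<in> hyperplanes E \<Longrightarrow> (H \<in> S u w) = ((H \<in> S u v) \<noteq> (H \<in> S v w))"
proof -
  assume "H \<in> hyperplanes E"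
  then obtain a b where ab: "E a b" "H = cls {a, b}" using hyp_ex by blast
  show ?thesis unfolding ab(2) S_iff_side[OF ab(1)] by blast
qed

lemma S_edge: "E u v \<Longrightarrow> S u v = {cls {u, v}}"
proof (rule equalityI; rule subsetI)
  assume uv: "E u v"
  fix H assume H: "H \<in> S u v"
  then obtain a b where ab: "E a b" "H = cls {a, b}" using hyp_ex S_hyp by blast
  have s: "\<not> (d u a < d u b \<longleftrightarrow> d v a < d v b)" using H S_iff_side[OF ab(1)] ab(2) by simp
  have "(d u a < d u b \<and> d v b < d v a) \<or> (d v a < d v b \<and> d u b < d u a)"
    using s side_cases[OF ab(1), of u] side_cases[OF ab(1), of v] by linarith
  then have "{u, v} \<in> cls {a, b}"
    using cross_opp[OF ab(1), of u v] cross_opp[OF ab(1), of v u] uv Esym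
    unfolding cls_def by (auto simp: insert_commute)
  then have "cls {u, v} = H" using cls_eq ab(2) by simp
  then show "H \<in> {cls {u, v}}" by simp
next
  assume uv: "E u v"
  fix H assume "H \<in> {cls {u, v}}"
  then have "H = cls {u, v}" by simp
  moreover have "cls {u, v} \<in> S u v" using S_iff_side[OF uv, of u v] d_edge[OF uv] d_sym[of v u] by simp
  ultimately show "H \<in> S u v" by simp
qed

lemma S_card: "finite (S u v) \<and> card (S u v) = d u v"
proof (induction "d u v" arbitrary: u)
  case 0
  then have "u = v" by simp
  then have "S u v = {}" unfolding Sep_single using conn_refl by simp
  then show ?case using 0 by simp
next
  case (Suc n)
  obtain u' where u': "E u u'" "d u' v = n" using d_step[of u v n] Suc.hyps(2) by auto
  have ih: "finite (S u' v) \<and> card (S u' v) = n" using Suc.hyps(1)[of u'] u' by simp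
  let ?H = "cls {u, u'}"
  have nin: "?H \<notin> S u' v"
    using S_iff_side[OF u'(1), of u' v] Suc.hyps(2) u' d_sym[of v u] d_sym[of v u'] by simp
  have key: "K \<in> S u v \<longleftrightarrow> K \<in> insert ?H (S u' v)" for K
    proof (cases "K \<in> hyperplanes E")
      case True
      then show ?thesis using xor[OF True, of u v u'] S_edge[OF u'(1)] nin by auto
    next
      case False
      then show ?thesis using S_hyp cls_hyp[OF u'(1)] by auto
    qed
  have eq: "S u v = insert ?H (S u' v)" unfolding set_eq_iff using key by blast
  show ?case using eq ih nin Suc.hyps(2) by simp
qed

lemma S_fin: "finite (S u v)" using S_card by blast
lemma S_cardd: "card (S u v) = d u v" using S_card by blast

lemma S_empty: "S u v = {} \<Longrightarrow> u = v"
  using S_cardd[of u v] by simp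

lemma interval_disj: "m \<in> ginterval E x y \<Longrightarrow> S x m \<inter> S m y = {}"
proof (rule ccontr)
  assume m: "m \<in> ginterval E x y" and "S x m \<inter> S m y \<noteq> {}"
  then obtain K where K: "K \<in> S x m" "K \<in> S m y" by blast
  have sub: "S x y \<subseteq> (S x m - {K}) \<union> (S m y - {K})"
  proof
    fix J assume J: "J \<in> S x y"
    then have "J \<in> hyperplanes E" using S_hyp by blast
    then have "(J \<in> S x m) \<noteq> (J \<in> S m y)" using xor J by blast
    then show "J \<in> (S x m - {K}) \<union> (S m y - {K})" using K by auto
  qed
  have "card (S x y) \<le> card ((S x m - {K}) \<union> (S m y - {K}))"
    using sub by (intro card_mono) (simp_all add: S_fin)
  also have "\<dots> \<le> card (S x m - {K}) + card (S m y - {K})" by (rule card_Un_le)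
  also have "\<dots> = (d x m - 1) + (d m y - 1)" using K by (simp add: S_fin S_cardd)
  finally have "d x y \<le> (d x m - 1) + (d m y - 1)" by (simp add: S_cardd)
  moreover have "d x m \<ge> 1" "d m y \<ge> 1" using K S_cardd S_fin
    by (metis One_nat_def Suc_leI card_gt_0_iff empty_iff)+
  ultimately show False using m unfolding ginterval_iff by linarith
qed

lemma disj_interval: "S x m \<inter> S m y = {} \<Longrightarrow> m \<in> ginterval E x y"
proof -
  assume h: "S x m \<inter> S m y = {}"
  have key: "K \<in> S x y \<longleftrightarrow> K \<in> S x m \<union> S m y" for K
    proof (cases "K \<in> hyperplanes E")
      case True then show ?thesis using xor[OF True, of x y m] h by auto
    next
      case False then show ?thesis using S_hyp by auto
    qed
  have "S x y = S x m \<union> S m y" unfolding set_eq_iff using key by blast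
  then have "card (S x y) = card (S x m) + card (S m y)"
    using h by (simp add: S_fin card_Un_disjoint)
  then show ?thesis unfolding ginterval_iff by (simp add: S_cardd)
qed

lemma side_maj: "m \<in> ginterval E x y \<Longrightarrow> H \<in> hyperplanes E \<Longrightarrow>
   (H \<in> S z m) = (H \<in> S z x) \<or> (H \<in> S z m) = (H \<in> S z y)"
proof -
  assume m: "m \<in> ginterval E x y" and H: "H \<in> hyperplanes E"
  have "H \<notin> S x m \<or> H \<notin> S m y" using interval_disj[OF m] by blast
  then show ?thesis using xor[OF H, of z m x] xor[OF H, of z m y] S_sym[of x m] S_sym[of y m] by auto
qed

lemma Sep_anti: "A' \<subseteq> A \<Longrightarrow> B' \<subseteq> B \<Longrightarrow> Sep E A B \<subseteq> Sep E A' B'"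
proof (rule subsetI)
  fix H assume a: "A' \<subseteq> A" "B' \<subseteq> B" and "H \<in> Sep E A B"
  then obtain h1 h2 where h: "H \<in> hyperplanes E" "h1 \<in> halfspaces E H" "h2 \<in> halfspaces E H"
    "h1 \<noteq> h2" "A \<subseteq> h1" "B \<subseteq> h2" unfolding Sep_def by blast
  have "A' \<subseteq> h1" "B' \<subseteq> h2" using a h(5,6) by auto
  then have "\<exists>h1\<in>halfspaces E H. \<exists>h2\<in>halfspaces E H. h1 \<noteq> h2 \<and> A' \<subseteq> h1 \<and> B' \<subseteq> h2"
    using h(2,3,4) by (intro bexI[of _ h1] bexI[of _ h2]) simp_all
  then show "H \<in> Sep E A' B'" unfolding Sep_def using h(1) by simp
qed

lemma S_refl: "S z z = {}" unfolding Sep_single using conn_refl by simp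

section \<open>Equivariance\<close>

lemma pow_map:
  assumes iso: "\<And>u v. E u v \<longleftrightarrow> E (f u) (f v)"
  shows "(E ^^ n) u v \<Longrightarrow> (E ^^ n) (f u) (f v)"
proof (induction n arbitrary: u)
  case 0 then show ?case by (auto elim: relpowp_0_E)
next
  case (Suc n)
  then obtain y where "E u y" "(E ^^ n) y v" using relpowp_Suc_D2 by metis
  then show ?case using Suc.IH iso by (meson relpowp_Suc_I2)
qed

lemma pow_unmap:
  assumes iso: "\<And>u v. E u v \<longleftrightarrow> E (f u) (f v)" and sj: "surj f" and inj: "inj f"
  shows "(E ^^ n) (f u) (f v) \<Longrightarrow> (E ^^ n) u v"
proof (induction n arbitrary: u)
  case 0 then show ?case using inj by (auto elim: relpowp_0_E dest: injD)
next
  case (Suc n)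
  then obtain y where y: "E (f u) y" "(E ^^ n) y (f v)" using relpowp_Suc_D2 by metis
  obtain y' where "y = f y'" using sj by (metis surjD)
  then show ?case using Suc.IH iso y by (meson relpowp_Suc_I2)
qed

lemma d_map:
  assumes iso: "\<And>u v. E u v \<longleftrightarrow> E (f u) (f v)" and sj: "surj f" and inj: "inj f"
  shows "d (f u) (f v) = d u v"
proof (rule antisym)
  show "d (f u) (f v) \<le> d u v" using d_le pow_map[OF iso d_path] by blast
  show "d u v \<le> d (f u) (f v)" using d_le pow_unmap[OF iso sj inj d_path] by blast
qed

lemma interval_map:
  assumes iso: "\<And>u v. E u v \<longleftrightarrow> E (f u) (f v)" and sj: "surj f" and inj: "inj f"
  shows "f ` ginterval E x y = ginterval E (f x) (f y)"
proof (rule equalityI; rule subsetI)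
  fix w assume "w \<in> f ` ginterval E x y"
  then obtain w' where "w = f w'" "w' \<in> ginterval E x y" by blast
  then show "w \<in> ginterval E (f x) (f y)" unfolding ginterval_iff using d_map[OF iso sj inj] by simp
next
  fix w assume w: "w \<in> ginterval E (f x) (f y)"
  obtain w' where w': "w = f w'" using sj by (metis surjD)
  then have "w' \<in> ginterval E x y" using w unfolding ginterval_iff using d_map[OF iso sj inj] by simp
  then show "w \<in> f ` ginterval E x y" using w' by blast
qed

lemma stab_S:
  assumes iso: "\<And>u v. E u v \<longleftrightarrow> E (f u) (f v)" and sj: "surj f" and inj: "inj f"
    and J: "J \<in> hyperplanes E" and st: "hyp_image f J = J"
  shows "J \<in> S u v \<longleftrightarrow> J \<in> S (f u) (f v)"
proof -
  obtain a b where ab: "E a b" "J = cls {a, b}" using hyp_ex J by blast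
  have "{a, b} \<in> J" using ab cls_self by simp
  then have "f ` {a, b} \<in> hyp_image f J" unfolding hyp_image_def by blast
  then have "{f a, f b} \<in> J" using st by simp
  then have J2: "J = cls {f a, f b}" using cls_eq ab(2) by simp
  have e2: "E (f a) (f b)" using ab(1) iso by blast
  have 1: "J \<in> S u v \<longleftrightarrow> \<not> (d u a < d u b \<longleftrightarrow> d v a < d v b)"
    using S_iff_side[OF ab(1), of u v] ab(2) by simp
  have 2: "J \<in> S (f u) (f v) \<longleftrightarrow> \<not> (d (f u) (f a) < d (f u) (f b) \<longleftrightarrow> d (f v) (f a) < d (f v) (f b))"
    using S_iff_side[OF e2, of "f u" "f v"] J2 by simp
  show ?thesis unfolding 1 2 d_map[OF iso sj inj] ..
qed

lemma ginterval_sym: "ginterval E x y = ginterval E y x"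
  unfolding ginterval_def using d_sym by (simp add: add.commute)

lemma main:
  assumes iso: "\<And>u v. E u v \<longleftrightarrow> E (f u) (f v)" and sj: "surj f" and inj: "inj f"
    and Hsub: "S z (f z) \<subseteq> HH" and fz: "f z \<noteq> z"
    and strong: "\<And>J. J \<in> HH \<Longrightarrow> hyp_image f J \<noteq> J \<Longrightarrow>
        \<not> Sep E (carrier_hyp J) (carrier_hyp (hyp_image f J)) \<subseteq> HH"
    and noinv: "\<And>C. is_cube E C \<Longrightarrow> f ` C = C \<Longrightarrow> (\<forall>v\<in>C. f v = v)"
  shows False
proof -
  define w where "w = f z"
  define A where "A = {J \<in> S z w. \<exists>z'. S z z' = {J}}"
  have Asub: "A \<subseteq> S z w" unfolding A_def by blast
  have Afin: "finite A" using Asub S_fin finite_subset by blast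
  have Ahyp: "A \<subseteq> hyperplanes E" using Asub S_hyp by blast
  have stab: "hyp_image f J = J" if J: "J \<in> A" for J
  proof (rule ccontr)
    assume ne: "hyp_image f J \<noteq> J"
    obtain z' where z': "S z z' = {J}" using J unfolding A_def by blast
    have "d z z' = 1" using S_cardd[of z z'] z' by simp
    then have e: "E z z'" by (rule d_1)
    then have "J = cls {z, z'}" using S_edge[OF e] z' by simp
    then have zz: "{z, z'} \<in> J" using cls_self by simp
    have JH: "J \<in> HH" using J Asub Hsub unfolding w_def by blast
    have "{z} \<subseteq> carrier_hyp J" using zz unfolding carrier_hyp_def by blast
    moreover have "f ` {z, z'} \<in> hyp_image f J" using zz unfolding hyp_image_def by blast
    then have "{w} \<subseteq> carrier_hyp (hyp_image f J)" unfolding carrier_hyp_def w_def by blast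
    ultimately have "Sep E (carrier_hyp J) (carrier_hyp (hyp_image f J)) \<subseteq> S z w" by (rule Sep_anti)
    then have "Sep E (carrier_hyp J) (carrier_hyp (hyp_image f J)) \<subseteq> HH" using Hsub unfolding w_def by blast
    then show False using strong[OF JH ne] by blast
  qed
  have real: "\<exists>v. S z v = T" if TA: "T \<subseteq> A" for T
  proof -
    have "finite T" using TA Afin finite_subset by blast
    then show ?thesis using TA
    proof (induction T rule: finite_induct)
      case empty then show ?case using S_refl by blast
    next
      case (insert H T)
      obtain v where v: "S z v = T" using insert by blast
      have HA: "H \<in> A" using insert by blast
      obtain zh where zh: "S z zh = {H}" using HA unfolding A_def by blast
      obtain m where m: "m \<in> ginterval E v zh" "m \<in> ginterval E zh w" "m \<in> ginterval E v w"
        using median_ex[of v zh w] by blast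
      have key: "K \<in> S z m \<longleftrightarrow> K \<in> insert H T" for K
      proof (cases "K \<in> hyperplanes E")
        case True
        have maj: "(K \<in> S z m) = (K \<in> S z v) \<or> (K \<in> S z m) = (K \<in> S z zh)"
          "(K \<in> S z m) = (K \<in> S z zh) \<or> (K \<in> S z m) = (K \<in> S z w)"
          "(K \<in> S z m) = (K \<in> S z v) \<or> (K \<in> S z m) = (K \<in> S z w)"
          using side_maj[OF m(1) True] side_maj[OF m(2) True] side_maj[OF m(3) True] by blast+
        have inw: "K \<in> insert H T \<Longrightarrow> K \<in> S z w" using insert.prems Asub by blast
        show ?thesis
        proof (cases "K = H")
          case True then show ?thesis using maj inw zh by auto
        next
          case False
          then show ?thesis using maj inw zh v by auto
        qed
      next
        case False
        then show ?thesis using S_hyp insert.prems Ahyp by blast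
      qed
      have "S z m = insert H T" unfolding set_eq_iff using key by blast
      then show ?case by blast
    qed
  qed
  obtain q where q: "S z q = A" using real by blast
  have Sw: "S w (f q) = A"
  proof -
    have "A \<subseteq> S w (f q)"
    proof
      fix J assume J: "J \<in> A"
      then show "J \<in> S w (f q)"
        using stab_S[OF iso sj inj _ stab[OF J], of z q] q Ahyp unfolding w_def by blast
    qed
    moreover have "card (S w (f q)) = card A"
      using S_cardd[of "f z" "f q"] S_cardd[of z q] d_map[OF iso sj inj, of z q] q unfolding w_def by simp
    ultimately show ?thesis using S_fin card_subset_eq by metis
  qed
  have SA: "S z w = A"
  proof (rule ccontr)
    assume "S z w \<noteq> A"
    then obtain K where K: "K \<in> S z w" "K \<notin> A" using Asub by blast
    have "K \<in> S z (f q)" using xor[of K z "f q" w] K S_hyp Sw by blast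
    then have "z \<noteq> f q" using S_refl by auto
    then obtain n where n: "d z (f q) = Suc n" by (cases "d z (f q)") auto
    obtain z' where z': "E z z'" "d z' (f q) = n" using d_step[OF n] by blast
    let ?J = "cls {z, z'}"
    have J1: "S z z' = {?J}" using S_edge[OF z'(1)] .
    have J2: "?J \<notin> S z' (f q)"
      using S_iff_side[OF z'(1), of z' "f q"] n z' d_sym[of "f q" z] d_sym[of "f q" z'] by simp
    have "?J \<in> S z (f q)" using xor[OF cls_hyp[OF z'(1)], of z "f q" z'] J1 J2 by simp
    then have "?J \<in> S z w" "?J \<notin> A" using xor[OF cls_hyp[OF z'(1)], of z "f q" w] Sw Asub by auto
    moreover have "?J \<in> A" using calculation(1) J1 unfolding A_def by blast
    ultimately show False by blast
  qed
  have fw: "f w = z"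
  proof -
    have "A \<subseteq> S w (f w)"
    proof
      fix J assume J: "J \<in> A"
      then show "J \<in> S w (f w)"
        using stab_S[OF iso sj inj _ stab[OF J], of z w] SA Ahyp unfolding w_def by blast
    qed
    moreover have "card (S w (f w)) = card A"
      using S_cardd[of w "f w"] S_cardd[of z w] d_map[OF iso sj inj, of z w] SA unfolding w_def by simp
    ultimately have Sww: "S w (f w) = A" using S_fin card_subset_eq by metis
    have "K \<notin> S z (f w)" for K
    proof (cases "K \<in> hyperplanes E")
      case True then show ?thesis using xor[OF True, of z "f w" w] SA Sww by simp
    next
      case False then show ?thesis using S_hyp by blast
    qed
    then have "S z (f w) = {}" by blast
    then show ?thesis using S_empty by metis
  qed
  define C where "C = ginterval E z w"
  have fC: "f ` C = C" unfolding C_def interval_map[OF iso sj inj] fw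
    using ginterval_sym unfolding w_def by simp
  have zC: "z \<in> C" unfolding C_def ginterval_iff by simp
  have CA: "S z v \<subseteq> A" if v: "v \<in> C" for v
  proof
    fix K assume K: "K \<in> S z v"
    have "K \<notin> S v w" using interval_disj[OF v[unfolded C_def]] K by blast
    then show "K \<in> A" using xor[of K z w v] K S_hyp SA by blast
  qed
  define k where "k = card A"
  obtain idx where idx: "bij_betw idx {0..<k} A" using ex_bij_betw_nat_finite[OF Afin] unfolding k_def by blast
  have idxA: "i < k \<Longrightarrow> idx i \<in> A" for i using idx unfolding bij_betw_def by auto
  have idxinj: "i < k \<Longrightarrow> j < k \<Longrightarrow> idx i = idx j \<Longrightarrow> i = j" for i j
    using idx unfolding bij_betw_def inj_on_def by auto
  have idxsurj: "K \<in> A \<Longrightarrow> \<exists>i<k. idx i = K" for K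
    using idx unfolding bij_betw_def by force
  define F where "F v i = (i < k \<and> idx i \<in> S z v)" for v i
  have diffset: "{i. F u i \<noteq> F v i} = {i. i < k \<and> idx i \<in> S u v}" if "u \<in> C" "v \<in> C" for u v
  proof -
    have "F u i \<noteq> F v i \<longleftrightarrow> i < k \<and> idx i \<in> S u v" for i
    proof (cases "i < k")
      case True
      have "idx i \<in> hyperplanes E" using idxA[OF True] Ahyp by blast
      then show ?thesis unfolding F_def using xor[of "idx i" u v z] S_sym[of u z] True by auto
    next
      case False then show ?thesis unfolding F_def by simp
    qed
    then show ?thesis by blast
  qed
  have cardd: "card {i. i < k \<and> idx i \<in> S u v} = d u v" if uv: "u \<in> C" "v \<in> C" for u v
  proof -
    have sub: "S u v \<subseteq> A"
    proof
      fix K assume K: "K \<in> S u v"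
      then have "K \<in> hyperplanes E" using S_hyp by blast
      then have "K \<in> S z u \<or> K \<in> S z v" using xor[of K u v z] K S_sym[of u z] by auto
      then show "K \<in> A" using CA[OF uv(1)] CA[OF uv(2)] by blast
    qed
    have img: "idx ` {i. i < k \<and> idx i \<in> S u v} = S u v"
      using sub idxsurj by force
    have inj: "inj_on idx {i. i < k \<and> idx i \<in> S u v}"
      using idxinj unfolding inj_on_def by blast
    show ?thesis using card_image[OF inj] img S_cardd by simp
  qed
  have cube: "is_cube E C"
    unfolding is_cube_def
  proof (intro exI conjI)
    show "bij_betw F C {x. \<forall>i\<ge>k. \<not> x i}"
    proof (rule bij_betw_imageI)
      show "inj_on F C"
      proof (rule inj_onI)
        fix u v assume u: "u \<in> C" and v: "v \<in> C" and eq: "F u = F v"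
        have "{i. F u i \<noteq> F v i} = {}" using eq by simp
        then have "{i. i < k \<and> idx i \<in> S u v} = {}" using diffset[OF u v] by simp
        then have "card {i. i < k \<and> idx i \<in> S u v} = 0" by (metis card.empty)
        then have "d u v = 0" using cardd[OF u v] by linarith
        then show "u = v" by simp
      qed
      show "F ` C = {x. \<forall>i\<ge>k. \<not> x i}"
      proof (rule equalityI; rule subsetI)
        fix x assume "x \<in> F ` C" then show "x \<in> {x. \<forall>i\<ge>k. \<not> x i}" unfolding F_def by auto
      next
        fix x assume x: "x \<in> {x. \<forall>i\<ge>k. \<not> x i}"
        define T where "T = idx ` {i. i < k \<and> x i}"
        have TA: "T \<subseteq> A" unfolding T_def using idxA by blast
        obtain v where v: "S z v = T" using real[OF TA] by blast
        have "S z v \<inter> S v w = {}"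
        proof -
          have "K \<notin> S v w" if K: "K \<in> S z v" for K
          proof -
            have "K \<in> S z w" using K v TA SA by blast
            then show ?thesis using xor[of K z w v] K S_hyp by blast
          qed
          then show ?thesis by blast
        qed
        then have vC: "v \<in> C" unfolding C_def by (rule disj_interval)
        have "F v i = x i" for i
        proof (cases "i < k")
          case True
          have "idx i \<in> T \<longleftrightarrow> x i"
          proof
            assume "idx i \<in> T"
            then obtain j where "j < k" "x j" "idx i = idx j" unfolding T_def by blast
            then show "x i" using idxinj[OF True] by metis
          next
            assume "x i" then show "idx i \<in> T" unfolding T_def using True by blast
          qed
          then show ?thesis unfolding F_def using True v by simp
        next
          case False then show ?thesis unfolding F_def using x by simp
        qed
        then have "F v = x" by blast
        then show "x \<in> F ` C" using vC by blast
      qed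
    qed
    show "\<forall>u\<in>C. \<forall>v\<in>C. E u v \<longleftrightarrow> card {i. F u i \<noteq> F v i} = 1"
      using diffset cardd d_edge_iff by simp
  qed
  have "f z = z" using noinv[OF cube fC] zC by blast
  then show False using fz by simp
qed

end

theorem lemma3p5:
  fixes G :: "('g, 'b) monoid_scheme" and E :: "'v \<Rightarrow> 'v \<Rightarrow> bool"
    and phi :: "'g \<Rightarrow> 'v \<Rightarrow> 'v" and \<HH> :: "'v set set set"
  assumes "cat0_cube_complex E"
    and "isometric_action G E phi"
    and "no_cube_inversions G E phi"
    and "invariant_family G E phi \<HH>"
    and "strongly_collapsible G E phi \<HH>"
  shows "weakly_collapsible G E phi \<HH>"
proof -
  interpret mg E using assms(1) by unfold_locales
  have ga_iso: "group_action G UNIV phi \<and> (\<forall>g\<in>carrier G. \<forall>u v. E u v \<longleftrightarrow> E (phi g u) (phi g v))"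
    using assms(2) unfolding isometric_action_def .
  have ga: "group_action G UNIV phi" using ga_iso by (rule conjunct1)
  have iso0: "\<forall>g\<in>carrier G. \<forall>u v. E u v \<longleftrightarrow> E (phi g u) (phi g v)" using ga_iso by (rule conjunct2)
  show ?thesis unfolding weakly_collapsible_def
  proof (intro allI ballI impI)
    fix z g assume g: "g \<in> carrier G" and fz: "phi g z \<noteq> z"
    have "phi g \<in> Bij UNIV" using group_action.bij_prop0[OF ga g] .
    then have bij: "bij (phi g)" unfolding Bij_def by simp
    have iso: "\<And>u v. E u v \<longleftrightarrow> E (phi g u) (phi g v)" using iso0 g by blast
    have strong: "\<And>J. J \<in> \<HH> \<Longrightarrow> hyp_image (phi g) J \<noteq> J \<Longrightarrow>
        \<not> Sep E (carrier_hyp J) (carrier_hyp (hyp_image (phi g) J)) \<subseteq> \<HH>"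
    proof -
      fix J assume J: "J \<in> \<HH>" and ne: "hyp_image (phi g) J \<noteq> J"
      have s: "\<forall>H\<in>\<HH>. \<forall>g\<in>carrier G. hyp_image (phi g) H \<noteq> H \<longrightarrow>
          \<not> Sep E (carrier_hyp H) (carrier_hyp (hyp_image (phi g) H)) \<subseteq> \<HH>"
        using assms(5) unfolding strongly_collapsible_def .
      show "\<not> Sep E (carrier_hyp J) (carrier_hyp (hyp_image (phi g) J)) \<subseteq> \<HH>"
        using mp[OF bspec[OF bspec[OF s J] g] ne] .
    qed
    have noinv: "\<And>C. is_cube E C \<Longrightarrow> phi g ` C = C \<Longrightarrow> (\<forall>v\<in>C. phi g v = v)"
    proof -
      fix C assume c: "is_cube E C" "phi g ` C = C"
      have s: "\<forall>g\<in>carrier G. \<forall>C. is_cube E C \<and> phi g ` C = C \<longrightarrow> (\<forall>v\<in>C. phi g v = v)"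
        using assms(3) unfolding no_cube_inversions_def .
      show "\<forall>v\<in>C. phi g v = v" using mp[OF spec[OF bspec[OF s g], of C]] c by blast
    qed
    show "\<not> Sep E {z} {phi g z} \<subseteq> \<HH>"
    proof
      assume Hsub: "Sep E {z} {phi g z} \<subseteq> \<HH>"
      show False
        using main[OF iso bij_is_surj[OF bij] bij_is_inj[OF bij] Hsub fz strong noinv] .
    qed
  qed
qed

end
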